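(* Let $p$ be an odd prime and $\mathbb O$ Zorn's split octonion algebra over $\mathbb Q_p$. The lattice $\Lambda[0,1,-1,0,-1,1,0,0]$, i.e. the set of $\begin{pmatrix}x&(y_1,y_2,y_3)\\ (z_1,z_2,z_3)&w\end{pmatrix}$ with $x,w,y_3,z_3\in\mathbb Z_p$, $y_1,z_2\in p\mathbb Z_p$, $y_2,z_1\in p^{-1}\mathbb Z_p$, is a maximal order in $\mathbb O$.
   Context: Zorn's split octonion algebra $\mathbb O$ over a field $k$ is the set of formal matrices $\begin{pmatrix}a&\vec v\\ \vec w&d\end{pmatrix}$ with $a,d\in k$, $\vec v,\vec w\in k^3$, with entrywise addition and multiplication $\begin{pmatrix}a&\vec v\\ \vec w&d\end{pmatrix}\begin{pmatrix}\alpha&\vec\phi\\ \vec\psi&\delta\end{pmatrix}=\begin{pmatrix}a\alpha+\vec v\cdot\vec\psi & a\vec\phi+\delta\vec v-\vec w\times\vec\psi\\ \alpha\vec w+d\vec\psi+\vec v\times\vec\phi & d\delta+\vec w\cdot\vec\phi\end{pmatrix}$ (standard dot and cross products). For integers $a_1,\dots,a_8$, $\Lambda[a_1,\dots,a_8]$ is the set of $\begin{pmatrix}x&(y_1,y_2,y_3)\\ (z_1,z_2,z_3)&w\end{pmatrix}$ with $x\in p^{a_1}\mathbb Z_p$, $y_i\in p^{a_{i+1}}\mathbb Z_p$, $z_i\in p^{a_{i+4}}\mathbb Z_p$, $w\in p^{a_8}\mathbb Z_p$. A lattice is a finitely generated $\mathbb Z_p$-submodule spanning $\mathbb O$ over $\mathbb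 Q_p$; an order is a lattice that contains $\mathbf 1$ and is closed under multiplication; a maximal order is an order not properly contained in any other order. *)

theory Defs
  imports Complex_Main "HOL-Computational_Algebra.Primes"
begin

definition pval :: "nat \<Rightarrow> rat \<Rightarrow> int" where
  "pval p q = (case quotient_of q of (a, b) \<Rightarrow>
      int (multiplicity (int p) a) - int (multiplicity (int p) b))"

definition padic_abs :: "nat \<Rightarrow> rat \<Rightarrow> real" where
  "padic_abs p q = (if q = 0 then 0 else real p powr (- real_of_int (pval p q)))"

definition pcauchy :: "nat \<Rightarrow> (nat \<Rightarrow> rat) \<Rightarrow> bool" where
  "pcauchy p X = (\<forall>e>0. \<exists>N. \<forall>m\<ge>N. \<forall>n\<ge>N. padic_abs p (X m - X n) < e)"

definition padic_rel :: "nat \<Rightarrow> ((nat \<Rightarrow> rat) \<times> (nat \<Rightarrow> rat)) set" where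
  "padic_rel p = {(X, Y). pcauchy p X \<and> pcauchy p Y \<and>
       (\<lambda>n. padic_abs p (X n - Y n)) \<longlonglongrightarrow> 0}"

type_synonym qp = "(nat \<Rightarrow> rat) set"

definition Qp :: "nat \<Rightarrow> qp set" where
  "Qp p = {X. pcauchy p X} // padic_rel p"

definition qp_rep :: "qp \<Rightarrow> nat \<Rightarrow> rat" where
  "qp_rep A = (SOME X. X \<in> A)"

definition qp_class :: "nat \<Rightarrow> (nat \<Rightarrow> rat) \<Rightarrow> qp" where
  "qp_class p X = padic_rel p `` {X}"

definition qp_of_rat :: "nat \<Rightarrow> rat \<Rightarrow> qp" where
  "qp_of_rat p r = qp_class p (\<lambda>n. r)"

definition qp_add :: "nat \<Rightarrow> qp \<Rightarrow> qp \<Rightarrow> qp" where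
  "qp_add p A B = qp_class p (\<lambda>n. qp_rep A n + qp_rep B n)"

definition qp_mult :: "nat \<Rightarrow> qp \<Rightarrow> qp \<Rightarrow> qp" where
  "qp_mult p A B = qp_class p (\<lambda>n. qp_rep A n * qp_rep B n)"

definition qp_diff :: "nat \<Rightarrow> qp \<Rightarrow> qp \<Rightarrow> qp" where
  "qp_diff p A B = qp_class p (\<lambda>n. qp_rep A n - qp_rep B n)"

definition qp_norm :: "nat \<Rightarrow> qp \<Rightarrow> real" where
  "qp_norm p A = lim (\<lambda>n. padic_abs p (qp_rep A n))"

definition Zp :: "nat \<Rightarrow> qp set" where
  "Zp p = {A \<in> Qp p. qp_norm p A \<le> 1}"

definition pZp :: "nat \<Rightarrow> int \<Rightarrow> qp set" where
  "pZp p a = {qp_mult p (qp_of_rat p (of_nat p powi a)) z | z. z \<in> Zp p}"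

datatype 'a zorn = Zorn 'a "'a \<times> 'a \<times> 'a" "'a \<times> 'a \<times> 'a" 'a

type_synonym vec3 = "qp \<times> qp \<times> qp"

definition v1 :: "vec3 \<Rightarrow> qp" where "v1 v = fst v"
definition v2 :: "vec3 \<Rightarrow> qp" where "v2 v = fst (snd v)"
definition v3 :: "vec3 \<Rightarrow> qp" where "v3 v = snd (snd v)"

definition vdot :: "nat \<Rightarrow> vec3 \<Rightarrow> vec3 \<Rightarrow> qp" where
  "vdot p v w = qp_add p (qp_add p (qp_mult p (v1 v) (v1 w)) (qp_mult p (v2 v) (v2 w)))
                         (qp_mult p (v3 v) (v3 w))"

definition vcross :: "nat \<Rightarrow> vec3 \<Rightarrow> vec3 \<Rightarrow> vec3" where
  "vcross p v w =
     (qp_diff p (qp_mult p (v2 v) (v3 w)) (qp_mult p (v3 v) (v2 w)),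
      qp_diff p (qp_mult p (v3 v) (v1 w)) (qp_mult p (v1 v) (v3 w)),
      qp_diff p (qp_mult p (v1 v) (v2 w)) (qp_mult p (v2 v) (v1 w)))"

definition vadd :: "nat \<Rightarrow> vec3 \<Rightarrow> vec3 \<Rightarrow> vec3" where
  "vadd p v w = (qp_add p (v1 v) (v1 w), qp_add p (v2 v) (v2 w), qp_add p (v3 v) (v3 w))"

definition vsub :: "nat \<Rightarrow> vec3 \<Rightarrow> vec3 \<Rightarrow> vec3" where
  "vsub p v w = (qp_diff p (v1 v) (v1 w), qp_diff p (v2 v) (v2 w), qp_diff p (v3 v) (v3 w))"

definition vsmul :: "nat \<Rightarrow> qp \<Rightarrow> vec3 \<Rightarrow> vec3" where
  "vsmul p c v = (qp_mult p c (v1 v), qp_mult p c (v2 v), qp_mult p c (v3 v))"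

fun zmult :: "nat \<Rightarrow> qp zorn \<Rightarrow> qp zorn \<Rightarrow> qp zorn" where
  "zmult p (Zorn a v w d) (Zorn \<alpha> \<phi> \<psi> \<delta>) =
     Zorn (qp_add p (qp_mult p a \<alpha>) (vdot p v \<psi>))
          (vsub p (vadd p (vsmul p a \<phi>) (vsmul p \<delta> v)) (vcross p w \<psi>))
          (vadd p (vadd p (vsmul p \<alpha> w) (vsmul p d \<psi>)) (vcross p v \<phi>))
          (qp_add p (qp_mult p d \<delta>) (vdot p w \<phi>))"

fun zadd :: "nat \<Rightarrow> qp zorn \<Rightarrow> qp zorn \<Rightarrow> qp zorn" where
  "zadd p (Zorn a v w d) (Zorn \<alpha> \<phi> \<psi> \<delta>) =
     Zorn (qp_add p a \<alpha>) (vadd p v \<phi>) (vadd p w \<psi>) (qp_add p d \<delta>)"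

fun zsmul :: "nat \<Rightarrow> qp \<Rightarrow> qp zorn \<Rightarrow> qp zorn" where
  "zsmul p c (Zorn a v w d) = Zorn (qp_mult p c a) (vsmul p c v) (vsmul p c w) (qp_mult p c d)"

definition zzero :: "nat \<Rightarrow> qp zorn" where
  "zzero p = (let z = qp_of_rat p 0 in Zorn z (z, z, z) (z, z, z) z)"

definition zone :: "nat \<Rightarrow> qp zorn" where
  "zone p = (let z = qp_of_rat p 0; u = qp_of_rat p 1 in Zorn u (z, z, z) (z, z, z) u)"

definition Oct :: "nat \<Rightarrow> qp zorn set" where
  "Oct p = {Zorn a (y1, y2, y3) (z1, z2, z3) d | a y1 y2 y3 z1 z2 z3 d.
      a \<in> Qp p \<and> y1 \<in> Qp p \<and> y2 \<in> Qp p \<and> y3 \<in> Qp p \<and>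
      z1 \<in> Qp p \<and> z2 \<in> Qp p \<and> z3 \<in> Qp p \<and> d \<in> Qp p}"

definition zspan :: "nat \<Rightarrow> qp set \<Rightarrow> qp zorn set \<Rightarrow> qp zorn set" where
  "zspan p C S = {x. \<exists>xs cs. set xs \<subseteq> S \<and> length cs = length xs \<and> set cs \<subseteq> C \<and>
       x = foldr (zadd p) (map2 (zsmul p) cs xs) (zzero p)}"

definition is_lattice :: "nat \<Rightarrow> qp zorn set \<Rightarrow> bool" where
  "is_lattice p L \<longleftrightarrow> L \<subseteq> Oct p \<and>
     (\<exists>S. finite S \<and> S \<subseteq> L \<and> L = zspan p (Zp p) S) \<and>
     zspan p (Qp p) L = Oct p"

definition is_order :: "nat \<Rightarrow> qp zorn set \<Rightarrow> bool" where
  "is_order p L \<longleftrightarrow> is_lattice p L \<and> zone p \<in> L \<and> (\<forall>x\<in>L. \<forall>y\<in>L. zmult p x y \<in> L)"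

definition is_maximal_order :: "nat \<Rightarrow> qp zorn set \<Rightarrow> bool" where
  "is_maximal_order p L \<longleftrightarrow> is_order p L \<and> (\<forall>L'. is_order p L' \<and> L \<subseteq> L' \<longrightarrow> L' = L)"

text \<open>Lambda[a1,...,a8] (list of length 8; index i-1 holds a_i).\<close>
definition Lambda :: "nat \<Rightarrow> int list \<Rightarrow> qp zorn set" where
  "Lambda p as = {Zorn x (y1, y2, y3) (z1, z2, z3) w | x y1 y2 y3 z1 z2 z3 w.
      x \<in> pZp p (as ! 0) \<and> y1 \<in> pZp p (as ! 1) \<and> y2 \<in> pZp p (as ! 2) \<and> y3 \<in> pZp p (as ! 3) \<and>
      z1 \<in> pZp p (as ! 4) \<and> z2 \<in> pZp p (as ! 5) \<and> z3 \<in> pZp p (as ! 6) \<and> w \<in> pZp p (as ! 7)}"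

end

theory Submission
  imports Defs
begin
locale pc = fixes p :: nat assumes prime_p: "prime p"
begin

abbreviation "m (a::int) \<equiv> int (multiplicity (int p) a)"

lemma p_gt1: "p > 1" using prime_p prime_gt_1_nat by blast
lemma pe: "prime_elem (int p)" using prime_p by auto

lemma m_mult: "a \<noteq> 0 \<Longrightarrow> b \<noteq> 0 \<Longrightarrow> m (a*b) = m a + m b"
  using prime_elem_multiplicity_mult_distrib[OF pe] by simp

lemma pval_frac:
  assumes c: "c \<noteq> 0" and d: "d \<noteq> 0"
  shows "pval p (of_int c / of_int d) = m c - m d"
proof -
  obtain a b where q: "quotient_of (of_int c / of_int d) = (a, b)" by (cases "quotient_of (of_int c / of_int d)") auto
  have b: "b > 0" using quotient_of_denom_pos[OF q] .
  have e: "of_int c / of_int d = (of_int a / of_int b :: rat)" using quotient_of_div[OF q] .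
  have a: "a \<noteq> 0" using e c d b by auto
  have "of_int (a*d) = (of_int (c*b) :: rat)" using e b d by (simp add: field_simps)
  hence ad: "a*d = c*b" by linarith
  have "m a + m d = m c + m b" using m_mult[of a d] m_mult[of c b] a b c d ad by simp
  thus ?thesis unfolding pval_def q by simp
qed

lemma pval_rep: fixes q :: rat assumes "q \<noteq> 0" obtains c d where "c \<noteq> 0" "d \<noteq> 0" "q = of_int c / of_int d"
proof -
  obtain a b where qq: "quotient_of q = (a, b)" by (cases "quotient_of q") auto
  have "b > 0" using quotient_of_denom_pos[OF qq] .
  moreover have "q = of_int a / of_int b" using quotient_of_div[OF qq] .
  moreover have "a \<noteq> 0" using calculation assms by auto
  ultimately show ?thesis using that[of a b] by auto
qed

lemma pval_mult: "x \<noteq> 0 \<Longrightarrow> y \<noteq> 0 \<Longrightarrow> pval p (x*y) = pval p x + pval p y"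
proof -
  assume x: "x \<noteq> 0" and y: "y \<noteq> 0"
  obtain a b where ab: "a \<noteq> 0" "b \<noteq> 0" "x = of_int a / of_int b" using pval_rep[OF x] by blast
  obtain c d where cd: "c \<noteq> 0" "d \<noteq> 0" "y = of_int c / of_int d" using pval_rep[OF y] by blast
  have "x*y = of_int (a*c) / of_int (b*d)" using ab cd by simp
  moreover have "pval p (of_int (a*c) / of_int (b*d)) = m (a*c) - m (b*d)" using ab cd by (intro pval_frac) auto
  ultimately show ?thesis using pval_frac[of a b] pval_frac[of c d] ab cd m_mult by simp
qed

lemma pval_add: assumes "x \<noteq> 0" "y \<noteq> 0" "x + y \<noteq> 0"
  shows "pval p (x+y) \<ge> min (pval p x) (pval p y)"
proof -
  obtain a b where ab: "a \<noteq> 0" "b \<noteq> 0" "x = of_int a / of_int b" using pval_rep[OF assms(1)] by blast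
  obtain c d where cd: "c \<noteq> 0" "d \<noteq> 0" "y = of_int c / of_int d" using pval_rep[OF assms(2)] by blast
  have s: "x + y = of_int (a*d + c*b) / of_int (b*d)" using ab cd by (simp add: add_frac_eq mult.commute)
  have nz: "a*d + c*b \<noteq> 0"
  proof
    assume "a*d+c*b=0"
    hence "x + y = 0" using s by simp
    thus False using assms(3) by simp
  qed
  define k where "k = min (multiplicity (int p) (a*d)) (multiplicity (int p) (c*b))"
  have "int p ^ k dvd a*d" unfolding k_def by (rule multiplicity_dvd') simp
  moreover have "int p ^ k dvd c*b" unfolding k_def by (rule multiplicity_dvd') simp
  ultimately have "int p ^ k dvd a*d + c*b" by simp
  hence "multiplicity (int p) (a*d + c*b) \<ge> k" using nz p_gt1 by (intro multiplicity_geI) auto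
  hence "m (a*d+c*b) \<ge> min (m (a*d)) (m (c*b))" unfolding k_def by simp
  moreover have "pval p x = m (a*d) - m (b*d)"
  proof -
    have "x = of_int (a*d) / of_int (b*d)" using ab cd by simp
    hence "pval p x = pval p (of_int (a*d) / of_int (b*d))" by simp
    also have "\<dots> = m (a*d) - m (b*d)" by (rule pval_frac) (use ab cd in auto)
    finally show ?thesis .
  qed
  moreover have "pval p y = m (c*b) - m (b*d)"
  proof -
    have "y = of_int (c*b) / of_int (b*d)" using ab cd by simp
    hence "pval p y = pval p (of_int (c*b) / of_int (b*d))" by simp
    also have "\<dots> = m (c*b) - m (b*d)" by (rule pval_frac) (use ab cd in auto)
    finally show ?thesis .
  qed
  moreover have "pval p (x+y) = m (a*d+c*b) - m (b*d)"
    unfolding s by (rule pval_frac) (use ab cd nz in auto)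
  ultimately show ?thesis by linarith
qed

lemma pval_minus: "pval p (-x) = pval p x"
proof (cases "x = 0")
  case False
  then obtain a b where ab: "a \<noteq> 0" "b \<noteq> 0" "x = of_int a / of_int b" using pval_rep by blast
  have "pval p (-x) = pval p (of_int (-a) / of_int b)" using ab by simp
  also have "\<dots> = m (-a) - m b" by (rule pval_frac) (use ab in auto)
  also have "\<dots> = m a - m b" using multiplicity_times_unit_right[of "-1" "int p" a] by simp
  also have "\<dots> = pval p x" using pval_frac[of a b] ab by simp
  finally show ?thesis .
qed simp

lemma pval_pow: "pval p (of_nat p powi k) = k"
proof -
  have P: "pval p (of_nat p ^ n) = int n" for n
  proof -
    have "(of_nat p ^ n :: rat) = of_int (int p ^ n) / of_int 1" by simp
    hence "pval p (of_nat p ^ n) = m (int p ^ n) - m 1" using pval_frac[of "int p ^ n" 1] p_gt1 by simp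
    thus ?thesis using pe by simp
  qed
  have I: "pval p (inverse y) = - pval p y" if "y \<noteq> 0" for y :: rat
  proof -
    have "pval p (1::rat) = 0" using pval_frac[of 1 1] by simp
    moreover have "pval p (y * inverse y) = pval p y + pval p (inverse y)" using pval_mult[of y "inverse y"] that by simp
    ultimately show ?thesis using that by simp
  qed
  show ?thesis
  proof (cases "k \<ge> 0")
    case True
    hence "(of_nat p powi k :: rat) = of_nat p ^ nat k" by (simp add: power_int_def)
    thus ?thesis using P[of "nat k"] True by simp
  next
    case False
    hence "(of_nat p powi k :: rat) = inverse (of_nat p ^ nat (-k))"
      by (simp add: power_int_def power_inverse)
    moreover have "(of_nat p ^ nat (-k) :: rat) \<noteq> 0" using p_gt1 by simp
    ultimately show ?thesis using P[of "nat (-k)"] I False by simp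
  qed
qed

definition ab :: "rat \<Rightarrow> real" where "ab = padic_abs p"

lemma ab_nonneg: "ab x \<ge> 0" by (simp add: ab_def padic_abs_def)
lemma ab_zero[simp]: "ab 0 = 0" by (simp add: ab_def padic_abs_def)
lemma ab_eq0[simp]: "ab x = 0 \<longleftrightarrow> x = 0" using p_gt1 by (simp add: ab_def padic_abs_def)
lemma ab_mult: "ab (x*y) = ab x * ab y"
  by (cases "x = 0 \<or> y = 0") (auto simp: ab_def padic_abs_def pval_mult powr_add[symmetric])
lemma ab_minus: "ab (-x) = ab x" by (simp add: ab_def padic_abs_def pval_minus)
lemma ab_ultra: "ab (x+y) \<le> max (ab x) (ab y)"
proof (cases "x = 0 \<or> y = 0 \<or> x + y = 0")
  case True thus ?thesis using ab_nonneg[of x] ab_nonneg[of y] by (auto simp: le_max_iff_disj)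
next
  case False
  hence "pval p (x+y) \<ge> min (pval p x) (pval p y)" using pval_add by auto
  hence "- real_of_int (pval p (x+y)) \<le> max (- real_of_int (pval p x)) (- real_of_int (pval p y))" by linarith
  hence "real p powr (- real_of_int (pval p (x+y))) \<le> real p powr max (- real_of_int (pval p x)) (- real_of_int (pval p y))"
    using p_gt1 by (intro powr_mono) auto
  thus ?thesis using False by (simp add: ab_def padic_abs_def max_def split: if_splits)
qed
lemma ab_tri: "ab (x+y) \<le> ab x + ab y" using ab_ultra[of x y] ab_nonneg[of x] ab_nonneg[of y] by linarith
lemma ab_diff_ultra: "ab (x-y) \<le> max (ab x) (ab y)" using ab_ultra[of x "-y"] by (simp add: ab_minus)
lemma ab_sub_comm: "ab (x-y) = ab (y-x)" using ab_minus[of "x-y"] by simp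
lemma ab_one[simp]: "ab 1 = 1"
proof -
  have "pval p (1::rat) = 0" using pval_frac[of 1 1] by simp
  thus ?thesis using p_gt1 by (simp add: ab_def padic_abs_def)
qed
lemma ab_pow: "ab (of_nat p powi k) = real p powr (- real_of_int k)"
  using p_gt1 pval_pow by (simp add: ab_def padic_abs_def)

end

context pc begin

definition cau :: "(nat \<Rightarrow> rat) \<Rightarrow> bool" where "cau = pcauchy p"
definition nul :: "(nat \<Rightarrow> rat) \<Rightarrow> bool" where "nul X \<longleftrightarrow> (\<lambda>n. ab (X n)) \<longlonglongrightarrow> 0"

lemma cau_def2: "cau X \<longleftrightarrow> (\<forall>e>0. \<exists>N. \<forall>m\<ge>N. \<forall>n\<ge>N. ab (X m - X n) < e)"
  by (simp add: cau_def pcauchy_def ab_def)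

lemma rel_iff: "(X, Y) \<in> padic_rel p \<longleftrightarrow> cau X \<and> cau Y \<and> nul (\<lambda>n. X n - Y n)"
  by (simp add: padic_rel_def cau_def nul_def ab_def)

lemma sandw: assumes "\<And>n. g n \<le> h n" "\<And>n. 0 \<le> g n" "h \<longlonglongrightarrow> 0" shows "g \<longlonglongrightarrow> (0::real)"
  by (rule tendsto_sandwich[where f="\<lambda>n. 0" and g=g and h=h]) (use assms in auto)

lemma nul_add: "nul X \<Longrightarrow> nul Y \<Longrightarrow> nul (\<lambda>n. X n + Y n)"
  unfolding nul_def by (rule sandw[of _ "\<lambda>n. ab (X n) + ab (Y n)"]) (auto intro: ab_tri ab_nonneg tendsto_add_zero)

lemma nul_mult: assumes "nul X" "\<And>n. ab (Y n) \<le> B" shows "nul (\<lambda>n. X n * Y n)"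
  unfolding nul_def
proof (rule sandw[of _ "\<lambda>n. ab (X n) * B"])
  show "ab (X n * Y n) \<le> ab (X n) * B" for n using assms(2)[of n] ab_nonneg[of "X n"] by (simp add: ab_mult mult_left_mono)
  show "0 \<le> ab (X n * Y n)" for n by (rule ab_nonneg)
  have "(\<lambda>n. ab (X n) * B) \<longlonglongrightarrow> 0 * B" by (intro tendsto_mult tendsto_const) (use assms nul_def in auto)
  thus "(\<lambda>n. ab (X n) * B) \<longlonglongrightarrow> 0" by simp
qed

lemma nul_mult': assumes "nul X" "\<And>n. ab (Y n) \<le> B" shows "nul (\<lambda>n. Y n * X n)"
  using nul_mult[OF assms] by (simp add: mult.commute)

lemma nul_minus: "nul X \<Longrightarrow> nul (\<lambda>n. - X n)" by (simp add: nul_def ab_minus)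

lemma nul_const0: "nul (\<lambda>n. 0)" by (simp add: nul_def)

lemma cau_bdd: assumes "cau X" obtains B where "B > 0" "\<And>n. ab (X n) \<le> B"
proof -
  obtain N where N: "\<And>m n. m \<ge> N \<Longrightarrow> n \<ge> N \<Longrightarrow> ab (X m - X n) < 1" using assms unfolding cau_def2
    by (meson zero_less_one)
  define B where "B = 1 + ab (X N) + (\<Sum>i<N. ab (X i))"
  have s0: "(\<Sum>i<N. ab (X i)) \<ge> 0" by (intro sum_nonneg ab_nonneg)
  have "ab (X n) \<le> B" for n
  proof (cases "n \<ge> N")
    case True
    have "ab (X n) = ab ((X n - X N) + X N)" by simp
    also have "\<dots> \<le> ab (X n - X N) + ab (X N)" by (rule ab_tri)
    finally show ?thesis using N[OF True order.refl] s0 unfolding B_def by linarith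
  next
    case False
    hence "ab (X n) \<le> (\<Sum>i<N. ab (X i))" by (intro member_le_sum ab_nonneg) auto
    thus ?thesis using ab_nonneg[of "X N"] unfolding B_def by linarith
  qed
  moreover have "B > 0" using s0 ab_nonneg[of "X N"] unfolding B_def by linarith
  ultimately show ?thesis using that by blast
qed

lemma cau_const: "cau (\<lambda>n. r)" by (simp add: cau_def2)

lemma cau_add: assumes "cau X" "cau Y" shows "cau (\<lambda>n. X n + Y n)"
  unfolding cau_def2
proof (intro allI impI)
  fix e :: real assume e: "e > 0"
  obtain N1 where N1: "\<And>m n. m \<ge> N1 \<Longrightarrow> n \<ge> N1 \<Longrightarrow> ab (X m - X n) < e" using assms(1) e unfolding cau_def2 by meson
  obtain N2 where N2: "\<And>m n. m \<ge> N2 \<Longrightarrow> n \<ge> N2 \<Longrightarrow> ab (Y m - Y n) < e" using assms(2) e unfolding cau_def2 by meson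
  show "\<exists>N. \<forall>m\<ge>N. \<forall>n\<ge>N. ab (X m + Y m - (X n + Y n)) < e"
  proof (intro exI[of _ "max N1 N2"] allI impI)
    fix m n assume "max N1 N2 \<le> m" "max N1 N2 \<le> n"
    hence "ab (X m - X n) < e" "ab (Y m - Y n) < e" using N1 N2 by auto
    moreover have "ab (X m + Y m - (X n + Y n)) = ab ((X m - X n) + (Y m - Y n))" by (simp add: algebra_simps)
    ultimately show "ab (X m + Y m - (X n + Y n)) < e" using ab_ultra[of "X m - X n" "Y m - Y n"] by linarith
  qed
qed

lemma cau_minus: "cau X \<Longrightarrow> cau (\<lambda>n. - X n)"
proof -
  have "ab (- X m - - X n) = ab (X m - X n)" for m n using ab_minus[of "X m - X n"] by simp
  thus "cau X \<Longrightarrow> cau (\<lambda>n. - X n)" unfolding cau_def2 by simp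
qed

lemma cau_diff: "cau X \<Longrightarrow> cau Y \<Longrightarrow> cau (\<lambda>n. X n - Y n)"
  using cau_add[of X "\<lambda>n. - Y n"] cau_minus[of Y] by simp

lemma cau_mult: assumes "cau X" "cau Y" shows "cau (\<lambda>n. X n * Y n)"
  unfolding cau_def2
proof (intro allI impI)
  fix e :: real assume e: "e > 0"
  obtain BX where BX: "BX > 0" "\<And>n. ab (X n) \<le> BX" using cau_bdd[OF assms(1)] by blast
  obtain BY where BY: "BY > 0" "\<And>n. ab (Y n) \<le> BY" using cau_bdd[OF assms(2)] by blast
  define d where "d = e / (BX + BY)"
  have d: "d > 0" using e BX BY by (simp add: d_def)
  have dx: "BX * d < e" "BY * d < e" using e BX BY unfolding d_def by (simp_all add: field_simps)
  obtain N1 where N1: "\<And>m n. m \<ge> N1 \<Longrightarrow> n \<ge> N1 \<Longrightarrow> ab (X m - X n) < d" using assms(1) d unfolding cau_def2 by meson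
  obtain N2 where N2: "\<And>m n. m \<ge> N2 \<Longrightarrow> n \<ge> N2 \<Longrightarrow> ab (Y m - Y n) < d" using assms(2) d unfolding cau_def2 by meson
  show "\<exists>N. \<forall>m\<ge>N. \<forall>n\<ge>N. ab (X m * Y m - X n * Y n) < e"
  proof (intro exI[of _ "max N1 N2"] allI impI)
    fix m n assume "max N1 N2 \<le> m" "max N1 N2 \<le> n"
    hence a: "ab (X m - X n) < d" "ab (Y m - Y n) < d" using N1 N2 by auto
    have "ab (X m * (Y m - Y n)) \<le> BX * d" unfolding ab_mult using a BX ab_nonneg d by (intro mult_mono) auto
    moreover have "ab ((X m - X n) * Y n) \<le> d * BY" unfolding ab_mult using a BY ab_nonneg d by (intro mult_mono) auto
    moreover have "X m * Y m - X n * Y n = X m * (Y m - Y n) + (X m - X n) * Y n" by (simp add: algebra_simps)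
    ultimately show "ab (X m * Y m - X n * Y n) < e" using ab_ultra[of "X m * (Y m - Y n)" "(X m - X n) * Y n"] dx
      by (simp add: mult.commute)
  qed
qed

lemma equiv_rel: "equiv {X. cau X} (padic_rel p)"
proof (rule equivI)
  show "padic_rel p \<subseteq> {X. cau X} \<times> {X. cau X}" by (auto simp: rel_iff)
  show "refl_on {X. cau X} (padic_rel p)" by (auto simp: refl_on_def rel_iff nul_const0)
  show "sym (padic_rel p)" unfolding sym_def rel_iff
    using nul_minus by fastforce
  show "trans (padic_rel p)" unfolding trans_def rel_iff
  proof (intro allI impI, elim conjE)
    fix X Y Z assume "cau X" "cau Y" "cau Z" "nul (\<lambda>n. X n - Y n)" "nul (\<lambda>n. Y n - Z n)"
    thus "cau X \<and> cau Z \<and> nul (\<lambda>n. X n - Z n)" using nul_add[of "\<lambda>n. X n - Y n" "\<lambda>n. Y n - Z n"] by simp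
  qed
qed

lemma resp_add: "(X, X') \<in> padic_rel p \<Longrightarrow> (Y, Y') \<in> padic_rel p \<Longrightarrow> ((\<lambda>n. X n + Y n), (\<lambda>n. X' n + Y' n)) \<in> padic_rel p"
  unfolding rel_iff using cau_add nul_add[of "\<lambda>n. X n - X' n" "\<lambda>n. Y n - Y' n"] by (simp add: algebra_simps)

lemma resp_diff: "(X, X') \<in> padic_rel p \<Longrightarrow> (Y, Y') \<in> padic_rel p \<Longrightarrow> ((\<lambda>n. X n - Y n), (\<lambda>n. X' n - Y' n)) \<in> padic_rel p"
  unfolding rel_iff using cau_diff nul_add[of "\<lambda>n. X n - X' n" "\<lambda>n. - (Y n - Y' n)"] nul_minus[of "\<lambda>n. Y n - Y' n"]
  by (simp add: algebra_simps)

lemma resp_mult: assumes "(X, X') \<in> padic_rel p" "(Y, Y') \<in> padic_rel p"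
  shows "((\<lambda>n. X n * Y n), (\<lambda>n. X' n * Y' n)) \<in> padic_rel p"
proof -
  have c: "cau X" "cau X'" "cau Y" "cau Y'" "nul (\<lambda>n. X n - X' n)" "nul (\<lambda>n. Y n - Y' n)" using assms rel_iff by auto
  obtain BX where BX: "\<And>n. ab (X n) \<le> BX" using cau_bdd[OF c(1)] by blast
  obtain BY where BY: "\<And>n. ab (Y' n) \<le> BY" using cau_bdd[OF c(4)] by blast
  have "nul (\<lambda>n. X n * (Y n - Y' n) + (X n - X' n) * Y' n)"
    by (rule nul_add[OF nul_mult'[OF c(6) BX] nul_mult[OF c(5) BY]])
  moreover have "(\<lambda>n. X n * (Y n - Y' n) + (X n - X' n) * Y' n) = (\<lambda>n. X n * Y n - X' n * Y' n)"
    by (simp add: algebra_simps)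
  ultimately show ?thesis unfolding rel_iff using c cau_mult by simp
qed

end

context pc begin

definition NN :: "(nat \<Rightarrow> rat) \<Rightarrow> real" where "NN X = lim (\<lambda>n. ab (X n))"

lemma ab_revtri: "\<bar>ab a - ab b\<bar> \<le> ab (a - b)"
proof -
  have "ab a \<le> ab (a - b) + ab b" using ab_tri[of "a-b" b] by simp
  moreover have "ab b \<le> ab (b - a) + ab a" using ab_tri[of "b-a" a] by simp
  ultimately show ?thesis using ab_sub_comm[of a b] by linarith
qed

lemma NN_lim: assumes "cau X" shows "(\<lambda>n. ab (X n)) \<longlonglongrightarrow> NN X"
proof -
  have "Cauchy (\<lambda>n. ab (X n))"
  proof (rule CauchyI)
    fix e :: real assume "e > 0"
    then obtain N where N: "\<And>m n. m \<ge> N \<Longrightarrow> n \<ge> N \<Longrightarrow> ab (X m - X n) < e" using assms unfolding cau_def2 by meson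
    show "\<exists>M. \<forall>m\<ge>M. \<forall>n\<ge>M. norm (ab (X m) - ab (X n)) < e"
      using N ab_revtri by (metis order.strict_trans1 real_norm_def)
  qed
  hence "convergent (\<lambda>n. ab (X n))" by (simp add: Cauchy_convergent_iff)
  thus ?thesis unfolding NN_def by (simp add: convergent_LIMSEQ_iff)
qed

lemma NN_resp: assumes "(X, Y) \<in> padic_rel p" shows "NN X = NN Y"
proof -
  have c: "cau X" "cau Y" "nul (\<lambda>n. X n - Y n)" using assms rel_iff by auto
  have "(\<lambda>n. ab (X n) - ab (Y n)) \<longlonglongrightarrow> NN X - NN Y" by (intro tendsto_diff NN_lim c)
  moreover have "(\<lambda>n. ab (X n) - ab (Y n)) \<longlonglongrightarrow> 0"
  proof -
    have "(\<lambda>n. \<bar>ab (X n) - ab (Y n)\<bar>) \<longlonglongrightarrow> 0"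
      by (rule sandw[of _ "\<lambda>n. ab (X n - Y n)"]) (use ab_revtri c(3) nul_def in auto)
    thus ?thesis by (simp add: tendsto_rabs_zero_iff)
  qed
  ultimately have "NN X - NN Y = 0" using LIMSEQ_unique by blast
  thus ?thesis by simp
qed

lemma NN_mult: assumes "cau X" "cau Y" shows "NN (\<lambda>n. X n * Y n) = NN X * NN Y"
proof -
  have "(\<lambda>n. ab (X n * Y n)) \<longlonglongrightarrow> NN X * NN Y" unfolding ab_mult by (intro tendsto_mult NN_lim assms)
  moreover have "(\<lambda>n. ab (X n * Y n)) \<longlonglongrightarrow> NN (\<lambda>n. X n * Y n)" by (intro NN_lim cau_mult assms)
  ultimately show ?thesis using LIMSEQ_unique by metis
qed

lemma NN_add: assumes "cau X" "cau Y" shows "NN (\<lambda>n. X n + Y n) \<le> max (NN X) (NN Y)"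
proof -
  have "(\<lambda>n. max (ab (X n)) (ab (Y n))) \<longlonglongrightarrow> max (NN X) (NN Y)" by (intro tendsto_max NN_lim assms)
  moreover have "(\<lambda>n. ab (X n + Y n)) \<longlonglongrightarrow> NN (\<lambda>n. X n + Y n)" by (intro NN_lim cau_add assms)
  ultimately show ?thesis using ab_ultra by (intro LIMSEQ_le) auto
qed

lemma NN_diff: assumes "cau X" "cau Y" shows "NN (\<lambda>n. X n - Y n) \<le> max (NN X) (NN Y)"
proof -
  have "(\<lambda>n. max (ab (X n)) (ab (Y n))) \<longlonglongrightarrow> max (NN X) (NN Y)" by (intro tendsto_max NN_lim assms)
  moreover have "(\<lambda>n. ab (X n - Y n)) \<longlonglongrightarrow> NN (\<lambda>n. X n - Y n)" by (intro NN_lim cau_diff assms)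
  ultimately show ?thesis using ab_diff_ultra by (intro LIMSEQ_le) auto
qed

lemma NN_const: "NN (\<lambda>n. r) = ab r" unfolding NN_def by simp

lemma NN_nonneg: assumes "cau X" shows "NN X \<ge> 0"
  using NN_lim[OF assms] ab_nonneg by (intro LIMSEQ_le_const) auto

definition cls :: "(nat \<Rightarrow> rat) \<Rightarrow> qp" where "cls = qp_class p"

lemma cls_Qp: "cau X \<Longrightarrow> cls X \<in> Qp p"
  unfolding cls_def qp_class_def Qp_def cau_def by (rule quotientI) simp

lemma cls_eq: "cau X \<Longrightarrow> cau Y \<Longrightarrow> cls X = cls Y \<longleftrightarrow> (X, Y) \<in> padic_rel p"
  unfolding cls_def qp_class_def by (rule eq_equiv_class_iff[OF equiv_rel]) auto

lemma Qp_cases: assumes "A \<in> Qp p" obtains X where "cau X" "A = cls X"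
  using assms unfolding Qp_def cls_def qp_class_def cau_def by (elim quotientE) auto

lemma rep_rel: assumes "cau X" shows "(qp_rep (cls X), X) \<in> padic_rel p"
proof -
  have "X \<in> cls X" unfolding cls_def qp_class_def using equiv_class_self[OF equiv_rel] assms by auto
  hence "qp_rep (cls X) \<in> cls X" unfolding qp_rep_def by (rule someI[where P="\<lambda>Y. Y \<in> cls X"])
  hence "(X, qp_rep (cls X)) \<in> padic_rel p" unfolding cls_def qp_class_def by simp
  thus ?thesis using equiv_rel by (meson equivE symD)
qed

lemma rep_cau: "cau X \<Longrightarrow> cau (qp_rep (cls X))" using rep_rel rel_iff by blast

lemma add_cls: assumes "cau X" "cau Y" shows "qp_add p (cls X) (cls Y) = cls (\<lambda>n. X n + Y n)"
  unfolding qp_add_def cls_def[symmetric]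
  using assms rep_cau resp_add[OF rep_rel rep_rel] by (subst cls_eq) (auto intro: cau_add)

lemma diff_cls: assumes "cau X" "cau Y" shows "qp_diff p (cls X) (cls Y) = cls (\<lambda>n. X n - Y n)"
  unfolding qp_diff_def cls_def[symmetric]
  using assms rep_cau resp_diff[OF rep_rel rep_rel] by (subst cls_eq) (auto intro: cau_diff)

lemma mult_cls: assumes "cau X" "cau Y" shows "qp_mult p (cls X) (cls Y) = cls (\<lambda>n. X n * Y n)"
  unfolding qp_mult_def cls_def[symmetric]
  using assms rep_cau resp_mult[OF rep_rel rep_rel] by (subst cls_eq) (auto intro: cau_mult)

lemma norm_cls: assumes "cau X" shows "qp_norm p (cls X) = NN X"
  using NN_resp[OF rep_rel[OF assms]] unfolding qp_norm_def NN_def cls_def ab_def by simp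

lemma ofrat_cls: "qp_of_rat p r = cls (\<lambda>n. r)" by (simp add: qp_of_rat_def cls_def)

end

context pc begin

abbreviation "Q \<equiv> Qp p"
abbreviation "q0 \<equiv> qp_of_rat p 0"
abbreviation "q1 \<equiv> qp_of_rat p 1"

lemma ofrat_Q[simp]: "qp_of_rat p r \<in> Q" unfolding ofrat_cls by (rule cls_Qp[OF cau_const])

lemma add_Q[simp]: "A \<in> Q \<Longrightarrow> B \<in> Q \<Longrightarrow> qp_add p A B \<in> Q"
  by (elim Qp_cases) (simp add: add_cls cls_Qp cau_add)
lemma mult_Q[simp]: "A \<in> Q \<Longrightarrow> B \<in> Q \<Longrightarrow> qp_mult p A B \<in> Q"
  by (elim Qp_cases) (simp add: mult_cls cls_Qp cau_mult)
lemma diff_Q[simp]: "A \<in> Q \<Longrightarrow> B \<in> Q \<Longrightarrow> qp_diff p A B \<in> Q"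
  by (elim Qp_cases) (simp add: diff_cls cls_Qp cau_diff)

lemma add_0r[simp]: "A \<in> Q \<Longrightarrow> qp_add p A q0 = A"
  by (elim Qp_cases) (simp add: ofrat_cls add_cls cau_const)
lemma add_0l[simp]: "A \<in> Q \<Longrightarrow> qp_add p q0 A = A"
  by (elim Qp_cases) (simp add: ofrat_cls add_cls cau_const)
lemma mult_0r[simp]: "A \<in> Q \<Longrightarrow> qp_mult p A q0 = q0"
  by (elim Qp_cases) (simp add: ofrat_cls mult_cls cau_const)
lemma mult_0l[simp]: "A \<in> Q \<Longrightarrow> qp_mult p q0 A = q0"
  by (elim Qp_cases) (simp add: ofrat_cls mult_cls cau_const)
lemma mult_1r[simp]: "A \<in> Q \<Longrightarrow> qp_mult p A q1 = A"
  by (elim Qp_cases) (simp add: ofrat_cls mult_cls cau_const)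
lemma mult_1l[simp]: "A \<in> Q \<Longrightarrow> qp_mult p q1 A = A"
  by (elim Qp_cases) (simp add: ofrat_cls mult_cls cau_const)
lemma diff_00[simp]: "qp_diff p q0 q0 = q0"
  by (simp add: ofrat_cls diff_cls cau_const)
lemma mult_comm: "A \<in> Q \<Longrightarrow> B \<in> Q \<Longrightarrow> qp_mult p A B = qp_mult p B A"
  by (elim Qp_cases) (simp add: mult_cls mult.commute)
lemma mult_assoc: "A \<in> Q \<Longrightarrow> B \<in> Q \<Longrightarrow> C \<in> Q \<Longrightarrow> qp_mult p (qp_mult p A B) C = qp_mult p A (qp_mult p B C)"
  by (elim Qp_cases) (simp add: mult_cls cau_mult mult.assoc)
lemma ofrat_mult: "qp_mult p (qp_of_rat p r) (qp_of_rat p s) = qp_of_rat p (r * s)"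
  by (simp add: ofrat_cls mult_cls cau_const)

lemma norm_mult: "A \<in> Q \<Longrightarrow> B \<in> Q \<Longrightarrow> qp_norm p (qp_mult p A B) = qp_norm p A * qp_norm p B"
  by (elim Qp_cases) (simp add: mult_cls norm_cls cau_mult NN_mult)
lemma norm_add: "A \<in> Q \<Longrightarrow> B \<in> Q \<Longrightarrow> qp_norm p (qp_add p A B) \<le> max (qp_norm p A) (qp_norm p B)"
  by (elim Qp_cases) (simp add: add_cls norm_cls cau_add NN_add)
lemma norm_diff: "A \<in> Q \<Longrightarrow> B \<in> Q \<Longrightarrow> qp_norm p (qp_diff p A B) \<le> max (qp_norm p A) (qp_norm p B)"
  by (elim Qp_cases) (simp add: diff_cls norm_cls cau_diff NN_diff)
lemma norm_ofrat[simp]: "qp_norm p (qp_of_rat p r) = ab r"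
  by (simp add: ofrat_cls norm_cls cau_const NN_const)
lemma norm_nonneg: "A \<in> Q \<Longrightarrow> qp_norm p A \<ge> 0"
  by (elim Qp_cases) (simp add: norm_cls NN_nonneg)

definition bd :: "int \<Rightarrow> real" where "bd a = real p powr (- real_of_int a)"

lemma bd_pos: "bd a > 0" using p_gt1 by (simp add: bd_def)
lemma bd_mult: "bd a * bd b = bd (a + b)" by (simp add: bd_def powr_add[symmetric] algebra_simps)
lemma bd_mono: "a \<le> b \<Longrightarrow> bd b \<le> bd a" using p_gt1 by (simp add: bd_def)
lemma bd_0[simp]: "bd 0 = 1" using p_gt1 by (simp add: bd_def)

definition pw :: "int \<Rightarrow> qp" where "pw a = qp_of_rat p (of_nat p powi a)"

lemma ab_pw[simp]: "ab (of_nat p powi a) = bd a" by (simp add: ab_pow bd_def)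
lemma norm_pw[simp]: "qp_norm p (pw a) = bd a" by (simp add: pw_def)
lemma pw_Q[simp]: "pw a \<in> Q" by (simp add: pw_def)
lemma pw_0[simp]: "pw 0 = q1" by (simp add: pw_def)

lemma pw_mult: "qp_mult p (pw a) (pw b) = pw (a + b)"
  using p_gt1 by (simp add: pw_def ofrat_mult power_int_add)

lemma pZp_char: "pZp p a = {x \<in> Q. qp_norm p x \<le> bd a}"
proof (intro set_eqI iffI)
  fix x assume "x \<in> pZp p a"
  then obtain z where z: "z \<in> Zp p" "x = qp_mult p (pw a) z" unfolding pZp_def pw_def by auto
  hence "z \<in> Q" "qp_norm p z \<le> 1" by (auto simp: Zp_def)
  moreover have "qp_norm p x = bd a * qp_norm p z" using z calculation by (simp add: norm_mult norm_pw)
  ultimately show "x \<in> {x \<in> Q. qp_norm p x \<le> bd a}" using z bd_pos[of a]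
    by (auto intro: mult_left_le[of "qp_norm p z" "bd a", simplified])
next
  fix x assume "x \<in> {x \<in> Q. qp_norm p x \<le> bd a}"
  hence x: "x \<in> Q" "qp_norm p x \<le> bd a" by auto
  define z where "z = qp_mult p (pw (-a)) x"
  have "z \<in> Q" using x by (simp add: z_def)
  moreover have "qp_norm p z = bd (-a) * qp_norm p x" using x by (simp add: z_def norm_mult norm_pw)
  moreover have "bd (-a) * qp_norm p x \<le> bd (-a) * bd a" using x bd_pos[of "-a"] by simp
  ultimately have "z \<in> Zp p" using bd_mult[of "-a" a] by (simp add: Zp_def)
  moreover have "qp_mult p (pw a) z = x"
    using x by (simp add: z_def mult_assoc[symmetric] pw_mult)
  ultimately show "x \<in> pZp p a" unfolding pZp_def pw_def by auto
qed

end

context pc begin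

lemma zorn_cases: obtains a y1 y2 y3 z1 z2 z3 d where "x = Zorn a (y1,y2,y3) (z1,z2,z3) d"
  by (cases x) auto

fun allc :: "(nat \<Rightarrow> qp \<Rightarrow> bool) \<Rightarrow> qp zorn \<Rightarrow> bool" where
  "allc P (Zorn a (y1,y2,y3) (z1,z2,z3) d) = (P 0 a \<and> P 1 y1 \<and> P 2 y2 \<and> P 3 y3 \<and> P 4 z1 \<and> P 5 z2 \<and> P 6 z3 \<and> P 7 d)"

lemma zadd_smul: "zadd p (zsmul p c (Zorn a (y1,y2,y3) (z1,z2,z3) d)) (Zorn a' (y1',y2',y3') (z1',z2',z3') d') =
   Zorn (qp_add p (qp_mult p c a) a') (qp_add p (qp_mult p c y1) y1', qp_add p (qp_mult p c y2) y2', qp_add p (qp_mult p c y3) y3')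
        (qp_add p (qp_mult p c z1) z1', qp_add p (qp_mult p c z2) z2', qp_add p (qp_mult p c z3) z3') (qp_add p (qp_mult p c d) d')"
  by (simp add: vadd_def vsmul_def v1_def v2_def v3_def)

lemma span_gen:
  assumes S: "\<And>x. x \<in> S \<Longrightarrow> allc P x" and Z: "\<And>i. P i q0"
    and C: "\<And>i c u v. c \<in> C \<Longrightarrow> P i u \<Longrightarrow> P i v \<Longrightarrow> P i (qp_add p (qp_mult p c u) v)"
    and x: "x \<in> zspan p C S"
  shows "allc P x"
proof -
  have "\<forall>cs. length cs = length xs \<longrightarrow> set xs \<subseteq> S \<longrightarrow> set cs \<subseteq> C \<longrightarrow> allc P (foldr (zadd p) (map2 (zsmul p) cs xs) (zzero p))" for xs
  proof (induction xs)
    case Nil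
    show ?case using Z by (simp add: zzero_def Let_def)
  next
    case (Cons s xs)
    show ?case
    proof (intro allI impI)
      fix cs assume l: "length cs = length (s # xs)" and s: "set (s # xs) \<subseteq> S" and c: "set cs \<subseteq> C"
      then obtain c cs' where cs: "cs = c # cs'" by (cases cs) auto
      have r: "allc P (foldr (zadd p) (map2 (zsmul p) cs' xs) (zzero p))" using Cons.IH l s c cs by auto
      have sP: "allc P s" using s S by auto
      have cC: "c \<in> C" using c cs by auto
      obtain a y1 y2 y3 z1 z2 z3 d where sx: "s = Zorn a (y1,y2,y3) (z1,z2,z3) d" by (rule zorn_cases)
      obtain a' y1' y2' y3' z1' z2' z3' d' where rx: "foldr (zadd p) (map2 (zsmul p) cs' xs) (zzero p) = Zorn a' (y1',y2',y3') (z1',z2',z3') d'" by (rule zorn_cases)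
      show "allc P (foldr (zadd p) (map2 (zsmul p) cs (s # xs)) (zzero p))"
        using r sP unfolding cs sx by (simp add: rx vadd_def vsmul_def v1_def v2_def v3_def C[OF cC])
    qed
  qed
  thus ?thesis using x unfolding zspan_def by blast
qed

definition ok :: "int \<Rightarrow> qp \<Rightarrow> bool" where "ok a u \<longleftrightarrow> u \<in> Q \<and> qp_norm p u \<le> bd a"

lemma ok_mult: "ok a u \<Longrightarrow> ok b v \<Longrightarrow> a + b = c \<Longrightarrow> ok c (qp_mult p u v)"
  unfolding ok_def using norm_nonneg less_imp_le[OF bd_pos]
  by (auto simp: norm_mult bd_mult[symmetric] intro!: mult_mono)

lemma ok_add: "ok a u \<Longrightarrow> ok a v \<Longrightarrow> ok a (qp_add p u v)"
  unfolding ok_def using norm_add[of u v] by (auto intro: order.trans)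
lemma ok_diff: "ok a u \<Longrightarrow> ok a v \<Longrightarrow> ok a (qp_diff p u v)"
  unfolding ok_def using norm_diff[of u v] by (auto intro: order.trans)
lemma ok_0[simp]: "ok a q0" unfolding ok_def using bd_pos[of a] by simp
lemma ok_1[simp]: "ok 0 q1" unfolding ok_def by simp

abbreviation "LL \<equiv> Lambda p [0, 1, -1, 0, -1, 1, 0, 0]"

lemma Lam_iff: "Zorn a (y1,y2,y3) (z1,z2,z3) d \<in> LL \<longleftrightarrow>
   ok 0 a \<and> ok 1 y1 \<and> ok (-1) y2 \<and> ok 0 y3 \<and> ok (-1) z1 \<and> ok 1 z2 \<and> ok 0 z3 \<and> ok 0 d"
  unfolding Lambda_def pZp_char ok_def by simp

definition ex :: "nat \<Rightarrow> int" where "ex i = [0, 1, -1, 0, -1, 1, 0, 0] ! i"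

lemma LL_allc: "x \<in> LL \<longleftrightarrow> allc (\<lambda>i c. ok (ex i) c) x"
  by (rule zorn_cases[of x]) (simp add: Lam_iff ex_def)

lemma Oct_allc: "x \<in> Oct p \<longleftrightarrow> allc (\<lambda>i c. c \<in> Q) x"
  by (rule zorn_cases[of x]) (simp add: Oct_def)

lemma zone_LL: "zone p \<in> LL" by (simp add: zone_def Let_def Lam_iff)

lemma LL_Oct: "LL \<subseteq> Oct p"
proof
  fix x assume "x \<in> LL" thus "x \<in> Oct p" by (cases x rule: zorn_cases) (simp add: Lam_iff Oct_allc ok_def)
qed

lemma LL_mult: assumes "x \<in> LL" "y \<in> LL" shows "zmult p x y \<in> LL"
proof -
  obtain a y1 y2 y3 z1 z2 z3 d where x: "x = Zorn a (y1,y2,y3) (z1,z2,z3) d" by (rule zorn_cases)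
  obtain a' y1' y2' y3' z1' z2' z3' d' where y: "y = Zorn a' (y1',y2',y3') (z1',z2',z3') d'" by (rule zorn_cases)
  have h: "ok 0 a" "ok 1 y1" "ok (-1) y2" "ok 0 y3" "ok (-1) z1" "ok 1 z2" "ok 0 z3" "ok 0 d"
          "ok 0 a'" "ok 1 y1'" "ok (-1) y2'" "ok 0 y3'" "ok (-1) z1'" "ok 1 z2'" "ok 0 z3'" "ok 0 d'"
    using assms unfolding x y Lam_iff by auto
  show ?thesis unfolding x y
    by (simp add: Lam_iff vdot_def vcross_def vadd_def vsub_def vsmul_def v1_def v2_def v3_def)
       (intro conjI ok_add ok_diff; (rule ok_mult, rule h, rule h, simp))
qed

end

context pc begin

abbreviation "V0 \<equiv> (q0, q0, q0)"
definition "basis = [Zorn (pw 0) V0 V0 q0, Zorn q0 (pw 1, q0, q0) V0 q0, Zorn q0 (q0, pw (-1), q0) V0 q0,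
  Zorn q0 (q0, q0, pw 0) V0 q0, Zorn q0 V0 (pw (-1), q0, q0) q0, Zorn q0 V0 (q0, pw 1, q0) q0,
  Zorn q0 V0 (q0, q0, pw 0) q0, Zorn q0 V0 V0 (pw 0)]"

lemma decomp:
  assumes "c0 \<in> Q" "c1 \<in> Q" "c2 \<in> Q" "c3 \<in> Q" "c4 \<in> Q" "c5 \<in> Q" "c6 \<in> Q" "c7 \<in> Q"
  shows "foldr (zadd p) (map2 (zsmul p) [c0,c1,c2,c3,c4,c5,c6,c7] basis) (zzero p) =
    Zorn (qp_mult p c0 (pw 0)) (qp_mult p c1 (pw 1), qp_mult p c2 (pw (-1)), qp_mult p c3 (pw 0))
         (qp_mult p c4 (pw (-1)), qp_mult p c5 (pw 1), qp_mult p c6 (pw 0)) (qp_mult p c7 (pw 0))"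
  using assms by (simp add: basis_def zzero_def Let_def vadd_def vsmul_def v1_def v2_def v3_def)

lemma back_mult: "u \<in> Q \<Longrightarrow> qp_mult p (qp_mult p u (pw (-k))) (pw k) = u"
  by (simp add: mult_assoc pw_mult)

lemma ok_Zp: "ok k u \<Longrightarrow> qp_mult p u (pw (-k)) \<in> Zp p"
proof -
  assume "ok k u"
  hence u: "u \<in> Q" "qp_norm p u \<le> bd k" by (auto simp: ok_def)
  have "qp_norm p (qp_mult p u (pw (-k))) = qp_norm p u * bd (-k)" using u by (simp add: norm_mult)
  also have "\<dots> \<le> bd k * bd (-k)" using u bd_pos[of "-k"] by simp
  also have "\<dots> = 1" by (simp add: bd_mult)
  finally show ?thesis using u by (simp add: Zp_def)
qed

lemma Zp_ok: "c \<in> Zp p \<Longrightarrow> ok 0 c" by (simp add: Zp_def ok_def)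

lemma ok_pw[simp]: "ok k (pw k)" by (simp add: ok_def)

lemma basis_LL: "set basis \<subseteq> LL" by (simp add: basis_def Lam_iff)

lemma LL_span: "x \<in> LL \<Longrightarrow> x \<in> zspan p (Zp p) (set basis)"
proof -
  assume "x \<in> LL"
  then obtain a y1 y2 y3 z1 z2 z3 d where x: "x = Zorn a (y1,y2,y3) (z1,z2,z3) d"
    and h: "ok 0 a" "ok 1 y1" "ok (-1) y2" "ok 0 y3" "ok (-1) z1" "ok 1 z2" "ok 0 z3" "ok 0 d"
    by (cases x rule: zorn_cases) (auto simp: Lam_iff)
  have Q: "a \<in> Q" "y1 \<in> Q" "y2 \<in> Q" "y3 \<in> Q" "z1 \<in> Q" "z2 \<in> Q" "z3 \<in> Q" "d \<in> Q" using h by (auto simp: ok_def)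
  let ?cs = "[qp_mult p a (pw (-0)), qp_mult p y1 (pw (-1)), qp_mult p y2 (pw (-(-1))), qp_mult p y3 (pw (-0)),
              qp_mult p z1 (pw (-(-1))), qp_mult p z2 (pw (-1)), qp_mult p z3 (pw (-0)), qp_mult p d (pw (-0))]"
  have "set ?cs \<subseteq> Zp p" using ok_Zp[OF h(1)] ok_Zp[OF h(2)] ok_Zp[OF h(3)] ok_Zp[OF h(4)]
      ok_Zp[OF h(5)] ok_Zp[OF h(6)] ok_Zp[OF h(7)] ok_Zp[OF h(8)] by simp
  moreover have "x = foldr (zadd p) (map2 (zsmul p) ?cs basis) (zzero p)"
    unfolding x using Q by (subst decomp) (simp_all only: back_mult mult_Q ofrat_Q pw_Q)
  ultimately show ?thesis unfolding zspan_def by (intro CollectI exI[of _ basis] exI[of _ ?cs]) (simp add: basis_def)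
qed


lemma span_LL: "x \<in> zspan p (Zp p) LL \<Longrightarrow> x \<in> LL"
proof -
  assume x: "x \<in> zspan p (Zp p) LL"
  have "allc (\<lambda>i c. ok (ex i) c) x"
  proof (rule span_gen[OF _ _ _ x])
    show "allc (\<lambda>i c. ok (ex i) c) y" if "y \<in> LL" for y using that LL_allc by blast
    show "ok (ex i) q0" for i by simp
    show "ok (ex i) (qp_add p (qp_mult p c u) v)" if "c \<in> Zp p" "ok (ex i) u" "ok (ex i) v" for i c u v
      by (rule ok_add[OF ok_mult[OF Zp_ok[OF that(1)] that(2)] that(3)]) simp
  qed
  thus ?thesis using LL_allc by blast
qed

lemma span_Oct: "x \<in> zspan p Q (Oct p) \<Longrightarrow> x \<in> Oct p"
proof -
  assume x: "x \<in> zspan p Q (Oct p)"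
  have "allc (\<lambda>i c. c \<in> Q) x"
    by (rule span_gen[OF _ _ _ x]) (use Oct_allc in auto)
  thus ?thesis using Oct_allc by blast
qed

lemma Oct_span: "x \<in> Oct p \<Longrightarrow> x \<in> zspan p Q (set basis)"
proof -
  assume "x \<in> Oct p"
  then obtain a y1 y2 y3 z1 z2 z3 d where x: "x = Zorn a (y1,y2,y3) (z1,z2,z3) d"
    and Q: "a \<in> Q" "y1 \<in> Q" "y2 \<in> Q" "y3 \<in> Q" "z1 \<in> Q" "z2 \<in> Q" "z3 \<in> Q" "d \<in> Q"
    by (cases x rule: zorn_cases) (auto simp: Oct_allc)
  let ?cs = "[qp_mult p a (pw (-0)), qp_mult p y1 (pw (-1)), qp_mult p y2 (pw (-(-1))), qp_mult p y3 (pw (-0)),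
              qp_mult p z1 (pw (-(-1))), qp_mult p z2 (pw (-1)), qp_mult p z3 (pw (-0)), qp_mult p d (pw (-0))]"
  have "set ?cs \<subseteq> Q" using Q by simp
  moreover have "x = foldr (zadd p) (map2 (zsmul p) ?cs basis) (zzero p)"
    unfolding x using Q by (subst decomp) (simp_all only: back_mult mult_Q ofrat_Q pw_Q)
  ultimately show ?thesis unfolding zspan_def by (intro CollectI exI[of _ basis] exI[of _ ?cs]) (simp add: basis_def)
qed

lemma span_mono: "S \<subseteq> T \<Longrightarrow> zspan p C S \<subseteq> zspan p C T"
  unfolding zspan_def by blast

lemma LL_order: "is_order p LL"
  unfolding is_order_def is_lattice_def
proof (intro conjI)
  show "LL \<subseteq> Oct p" by (rule LL_Oct)
  show "\<exists>S. finite S \<and> S \<subseteq> LL \<and> LL = zspan p (Zp p) S"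
    using LL_span span_LL basis_LL span_mono[OF basis_LL, of "Zp p"]
    by (intro exI[of _ "set basis"]) blast
  show "zspan p Q LL = Oct p"
    using span_Oct Oct_span span_mono[OF LL_Oct, of Q] span_mono[OF basis_LL, of Q] by blast
  show "zone p \<in> LL" by (rule zone_LL)
  show "\<forall>x\<in>LL. \<forall>y\<in>LL. zmult p x y \<in> LL" using LL_mult by blast
qed
end

context pc begin

lemma fin_bound:
  assumes "finite A" "\<And>x. x \<in> A \<Longrightarrow> \<exists>M. \<forall>M'\<ge>M. R x M'"
  shows "\<exists>M. \<forall>M'\<ge>M. \<forall>x\<in>A. R x (M'::real)"
  using assms
proof (induction A rule: finite_induct)
  case empty show ?case by simp
next
  case (insert y A)
  have "\<exists>M. \<forall>M'\<ge>M. \<forall>x\<in>A. R x M'" using insert.IH insert.prems by simp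
  then obtain M1 where M1: "\<And>M' x. M' \<ge> M1 \<Longrightarrow> x \<in> A \<Longrightarrow> R x M'" by blast
  have "\<exists>M. \<forall>M'\<ge>M. R y M'" using insert.prems by simp
  then obtain M2 where M2: "\<And>M'. M' \<ge> M2 \<Longrightarrow> R y M'" by blast
  have "\<forall>M'\<ge>max M1 M2. \<forall>x\<in>insert y A. R x M'"
  proof (intro allI impI ballI)
    fix M' x assume "max M1 M2 \<le> M'" "x \<in> insert y A"
    thus "R x M'" using M1 M2 by (cases "x = y") auto
  qed
  thus ?case by blast
qed

fun ztop :: "qp zorn \<Rightarrow> qp" where "ztop (Zorn a v w d) = a"
fun zbot :: "qp zorn \<Rightarrow> qp" where "zbot (Zorn a v w d) = d"

definition TT :: "qp \<Rightarrow> qp zorn" where "TT t = Zorn t V0 V0 q0"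
definition DD :: "qp \<Rightarrow> qp zorn" where "DD t = Zorn q0 V0 V0 t"

lemma isoT: "y \<in> Oct p \<Longrightarrow> zmult p (zmult p (TT q1) y) (TT q1) = TT (ztop y)"
  by (cases y rule: zorn_cases) (simp add: Oct_allc TT_def vdot_def vcross_def vadd_def vsub_def vsmul_def v1_def v2_def v3_def)
lemma isoD: "y \<in> Oct p \<Longrightarrow> zmult p (zmult p (DD q1) y) (DD q1) = DD (zbot y)"
  by (cases y rule: zorn_cases) (simp add: Oct_allc DD_def vdot_def vcross_def vadd_def vsub_def vsmul_def v1_def v2_def v3_def)
lemma TT_mult: "s \<in> Q \<Longrightarrow> t \<in> Q \<Longrightarrow> zmult p (TT s) (TT t) = TT (qp_mult p s t)"
  by (simp add: TT_def vdot_def vcross_def vadd_def vsub_def vsmul_def v1_def v2_def v3_def)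
lemma DD_mult: "s \<in> Q \<Longrightarrow> t \<in> Q \<Longrightarrow> zmult p (DD s) (DD t) = DD (qp_mult p s t)"
  by (simp add: DD_def vdot_def vcross_def vadd_def vsub_def vsmul_def v1_def v2_def v3_def)

lemma pow_le: assumes "\<And>n. (r::real) ^ Suc n \<le> M" "r \<ge> 0" shows "r \<le> 1"
proof (rule ccontr)
  assume "\<not> r \<le> 1" hence r: "r > 1" by simp
  then obtain n where "M < r ^ n" using real_arch_pow by blast
  moreover have "r ^ n \<le> r ^ Suc n" using r by simp
  ultimately show False using assms(1)[of n] by simp
qed

lemma okR: "u \<in> Q \<Longrightarrow> qp_norm p (qp_mult p u (pw k)) \<le> 1 \<Longrightarrow> ok (-k) u"
proof -
  assume u: "u \<in> Q" "qp_norm p (qp_mult p u (pw k)) \<le> 1"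
  hence "qp_norm p u * bd k \<le> 1" by (simp add: norm_mult)
  hence "qp_norm p u * bd k * bd (-k) \<le> bd (-k)" using bd_pos[of "-k"] by simp
  hence "qp_norm p u \<le> bd (-k)" by (simp add: mult.assoc bd_mult)
  thus ?thesis using u by (simp add: ok_def)
qed

lemma okL: "u \<in> Q \<Longrightarrow> qp_norm p (qp_mult p (pw k) u) \<le> 1 \<Longrightarrow> ok (-k) u"
  using okR[of u k] mult_comm[of u "pw k"] by simp

theorem maxi: assumes ord: "is_order p L'" and sub: "LL \<subseteq> L'" shows "L' \<subseteq> LL"
proof
  obtain S where S: "finite S" "S \<subseteq> L'" "L' = zspan p (Zp p) S" using ord unfolding is_order_def is_lattice_def by blast
  have LO: "L' \<subseteq> Oct p" using ord unfolding is_order_def is_lattice_def by blast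
  have cl: "\<And>x y. x \<in> L' \<Longrightarrow> y \<in> L' \<Longrightarrow> zmult p x y \<in> L'" using ord unfolding is_order_def by blast
  define R where "R s M \<longleftrightarrow> allc (\<lambda>i c. c \<in> Q \<and> qp_norm p c \<le> M) s" for s M
  have "\<exists>M. \<forall>M'\<ge>M. \<forall>x\<in>S. R x M'"
  proof (rule fin_bound[OF S(1)])
    fix s assume "s \<in> S"
    hence "s \<in> Oct p" using S LO by blast
    then obtain a y1 y2 y3 z1 z2 z3 d where s: "s = Zorn a (y1,y2,y3) (z1,z2,z3) d"
      and Q: "a \<in> Q" "y1 \<in> Q" "y2 \<in> Q" "y3 \<in> Q" "z1 \<in> Q" "z2 \<in> Q" "z3 \<in> Q" "d \<in> Q"
      by (cases s rule: zorn_cases) (auto simp: Oct_allc)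
    have n: "qp_norm p a \<ge> 0" "qp_norm p y1 \<ge> 0" "qp_norm p y2 \<ge> 0" "qp_norm p y3 \<ge> 0"
      "qp_norm p z1 \<ge> 0" "qp_norm p z2 \<ge> 0" "qp_norm p z3 \<ge> 0" "qp_norm p d \<ge> 0" using Q norm_nonneg by auto
    show "\<exists>M. \<forall>M'\<ge>M. R s M'"
      by (intro exI[of _ "qp_norm p a + qp_norm p y1 + qp_norm p y2 + qp_norm p y3 + qp_norm p z1 + qp_norm p z2 + qp_norm p z3 + qp_norm p d"])
         (use n Q in \<open>auto simp: R_def s\<close>)
  qed
  then obtain M0 where M0: "\<forall>M'\<ge>M0. \<forall>x\<in>S. R x M'" by blast
  define M where "M = max M0 0"
  have MS: "\<forall>x\<in>S. R x M" "M \<ge> 0" using M0 by (auto simp: M_def)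
  have bnd: "R x M" if "x \<in> L'" for x
    unfolding R_def
  proof (rule span_gen[of S])
    show "allc (\<lambda>i c. c \<in> Q \<and> qp_norm p c \<le> M) x" if "x \<in> S" for x using MS that R_def by blast
    show "q0 \<in> Q \<and> qp_norm p q0 \<le> M" for i using MS by simp
    show "qp_add p (qp_mult p c u) v \<in> Q \<and> qp_norm p (qp_add p (qp_mult p c u) v) \<le> M"
      if "c \<in> Zp p" "u \<in> Q \<and> qp_norm p u \<le> M" "v \<in> Q \<and> qp_norm p v \<le> M" for i c u v
    proof -
      have c: "c \<in> Q" "qp_norm p c \<le> 1" using that(1) by (auto simp: Zp_def)
      have "qp_norm p (qp_mult p c u) \<le> 1 * M" unfolding norm_mult[OF c(1) conjunct1[OF that(2)]]
        using c that(2) norm_nonneg[of c] norm_nonneg[of u] MS by (intro mult_mono) auto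
      hence "qp_norm p (qp_add p (qp_mult p c u) v) \<le> M"
        using norm_add[of "qp_mult p c u" v] c that by auto
      thus ?thesis using c that by simp
    qed
    show "x \<in> zspan p (Zp p) S" using that S by blast
  qed
  have topL: "ztop y \<in> Q \<and> qp_norm p (ztop y) \<le> 1" if y: "y \<in> L'" for y
  proof -
    have yO: "y \<in> Oct p" using y LO by blast
    have tQ: "ztop y \<in> Q" using yO by (cases y rule: zorn_cases) (simp add: Oct_allc)
    have T1: "TT q1 \<in> L'" using sub by (simp add: TT_def Lam_iff subset_iff)
    have Ty: "TT (ztop y) \<in> L'" using cl[OF cl[OF T1 y] T1] isoT[OF yO] by simp
    have PW: "\<exists>c. c \<in> Q \<and> TT c \<in> L' \<and> qp_norm p c = qp_norm p (ztop y) ^ Suc n" for n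
    proof (induction n)
      case 0 show ?case using Ty tQ by auto
    next
      case (Suc n)
      then obtain c where c: "c \<in> Q" "TT c \<in> L'" "qp_norm p c = qp_norm p (ztop y) ^ Suc n" by blast
      have "TT (qp_mult p c (ztop y)) \<in> L'" using cl[OF c(2) Ty] TT_mult[OF c(1) tQ] by simp
      thus ?case using c tQ by (intro exI[of _ "qp_mult p c (ztop y)"]) (simp add: norm_mult)
    qed
    have "qp_norm p (ztop y) ^ Suc n \<le> M" for n
    proof -
      obtain c where c: "c \<in> Q" "TT c \<in> L'" "qp_norm p c = qp_norm p (ztop y) ^ Suc n" using PW by blast
      have "R (TT c) M" using bnd[OF c(2)] .
      thus ?thesis using c by (simp add: R_def TT_def)
    qed
    hence "qp_norm p (ztop y) \<le> 1" using pow_le norm_nonneg[OF tQ] by blast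
    thus ?thesis using tQ by simp
  qed
  have botL: "zbot y \<in> Q \<and> qp_norm p (zbot y) \<le> 1" if y: "y \<in> L'" for y
  proof -
    have yO: "y \<in> Oct p" using y LO by blast
    have tQ: "zbot y \<in> Q" using yO by (cases y rule: zorn_cases) (simp add: Oct_allc)
    have T1: "DD q1 \<in> L'" using sub by (simp add: DD_def Lam_iff subset_iff)
    have Ty: "DD (zbot y) \<in> L'" using cl[OF cl[OF T1 y] T1] isoD[OF yO] by simp
    have PW: "\<exists>c. c \<in> Q \<and> DD c \<in> L' \<and> qp_norm p c = qp_norm p (zbot y) ^ Suc n" for n
    proof (induction n)
      case 0 show ?case using Ty tQ by auto
    next
      case (Suc n)
      then obtain c where c: "c \<in> Q" "DD c \<in> L'" "qp_norm p c = qp_norm p (zbot y) ^ Suc n" by blast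
      have "DD (qp_mult p c (zbot y)) \<in> L'" using cl[OF c(2) Ty] DD_mult[OF c(1) tQ] by simp
      thus ?case using c tQ by (intro exI[of _ "qp_mult p c (zbot y)"]) (simp add: norm_mult)
    qed
    have "qp_norm p (zbot y) ^ Suc n \<le> M" for n
    proof -
      obtain c where c: "c \<in> Q" "DD c \<in> L'" "qp_norm p c = qp_norm p (zbot y) ^ Suc n" using PW by blast
      have "R (DD c) M" using bnd[OF c(2)] .
      thus ?thesis using c by (simp add: R_def DD_def)
    qed
    hence "qp_norm p (zbot y) \<le> 1" using pow_le norm_nonneg[OF tQ] by blast
    thus ?thesis using tQ by simp
  qed
  fix x assume xL: "x \<in> L'"
  then obtain a y1 y2 y3 z1 z2 z3 d where x: "x = Zorn a (y1,y2,y3) (z1,z2,z3) d"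
    and Q: "a \<in> Q" "y1 \<in> Q" "y2 \<in> Q" "y3 \<in> Q" "z1 \<in> Q" "z2 \<in> Q" "z3 \<in> Q" "d \<in> Q"
    using LO by (cases x rule: zorn_cases) (auto simp: Oct_allc subset_iff)
  have f: "Zorn q0 V0 (pw (-1), q0, q0) q0 \<in> L'" "Zorn q0 V0 (q0, pw 1, q0) q0 \<in> L'" "Zorn q0 V0 (q0, q0, pw 0) q0 \<in> L'"
          "Zorn q0 (pw 1, q0, q0) V0 q0 \<in> L'" "Zorn q0 (q0, pw (-1), q0) V0 q0 \<in> L'" "Zorn q0 (q0, q0, pw 0) V0 q0 \<in> L'"
    using sub by (auto simp: Lam_iff subset_iff simp del: pw_0)
  have ZZ: "ok 0 a" using topL[OF xL] Q unfolding x by (simp add: ok_def)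
  have ZD: "ok 0 d" using botL[OF xL] Q unfolding x by (simp add: ok_def)
  have Y1: "ok (- (-1)) y1" using topL[OF cl[OF xL f(1)]] Q unfolding x
    by (intro okR) (simp_all add: vdot_def vcross_def vadd_def vsub_def vsmul_def v1_def v2_def v3_def del: pw_0)
  have Y2: "ok (- 1) y2" using topL[OF cl[OF xL f(2)]] Q unfolding x
    by (intro okR) (simp_all add: vdot_def vcross_def vadd_def vsub_def vsmul_def v1_def v2_def v3_def del: pw_0)
  have Y3: "ok (- 0) y3" using topL[OF cl[OF xL f(3)]] Q unfolding x
    by (intro okR) (simp_all add: vdot_def vcross_def vadd_def vsub_def vsmul_def v1_def v2_def v3_def del: pw_0)
  have W1: "ok (- 1) z1" using topL[OF cl[OF f(4) xL]] Q unfolding x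
    by (intro okL) (simp_all add: vdot_def vcross_def vadd_def vsub_def vsmul_def v1_def v2_def v3_def del: pw_0)
  have W2: "ok (- (-1)) z2" using topL[OF cl[OF f(5) xL]] Q unfolding x
    by (intro okL) (simp_all add: vdot_def vcross_def vadd_def vsub_def vsmul_def v1_def v2_def v3_def del: pw_0)
  have W3: "ok (- 0) z3" using topL[OF cl[OF f(6) xL]] Q unfolding x
    by (intro okL) (simp_all add: vdot_def vcross_def vadd_def vsub_def vsmul_def v1_def v2_def v3_def del: pw_0)
  show "x \<in> LL" unfolding x Lam_iff using ZZ ZD Y1 Y2 Y3 W1 W2 W3 by simp
qed

end

theorem final: assumes "prime p" shows "is_maximal_order p (Lambda p [0, 1, -1, 0, -1, 1, 0, 0])"
proof -
  interpret pc p by unfold_locales (rule assms)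
  show ?thesis unfolding is_maximal_order_def using LL_order maxi by blast
qed

theorem mainTheorem14:
  fixes p :: nat
  assumes "prime p" and "odd p"
  shows "is_maximal_order p (Lambda p [0, 1, -1, 0, -1, 1, 0, 0])"
  using final assms(1) by blast

end
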